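(* Let $0<y\le1$. For all $z=u+iv$ with $v>0$ and $1-\sqrt y\le|u|\le1+\sqrt y$, $$|z+ys_y(z)|\ge\frac{1}{1+\sqrt y}.$$
   Context: $s_y(z)$ is the Stieltjes transform of the symmetrized Marchenko–Pastur law with parameter $y$, i.e. $s_y(z)=\frac{-(z+\frac{y-1}{z})+\sqrt{(z+\frac{y-1}{z})^2-4y}}{2y}$ with the branch of the square root chosen so that $\operatorname{Im}s_y(z)>0$; it is the solution with positive imaginary part of $ys^2+(z+\frac{y-1}{z})s+1=0$. *)

theory Defs
  imports Complex_Main
begin

text \<open>Stieltjes transform of the symmetrized Marchenko--Pastur law with parameter y:
  the root with positive imaginary part of
  y s^2 + (z + (y-1)/z) s + 1 = 0.\<close>
definition s_MP :: "real \<Rightarrow> complex \<Rightarrow> complex" where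
  "s_MP y z = (THE s. Im s > 0 \<and>
      complex_of_real y * s^2 + (z + complex_of_real (y - 1) / z) * s + 1 = 0)"

end

theory Submission
  imports Defs
begin


lemma sign_lemma:
  fixes a b :: complex
  assumes "Im a \<ge> 0" "Im b \<ge> 0" "Im a + Im b > 0" "Im (a*b) = 0" "Re (a*b) > 0"
  shows False
proof -
  have e1: "Re a * Im b + Im a * Re b = 0" using assms(4) by simp
  have e2: "Re a * Re b - Im a * Im b > 0" using assms(5) by simp
  have "Im a * Im b \<ge> 0" using assms by simp
  hence pos: "Re a * Re b > 0" using e2 by linarith
  show False
  proof (cases "Im a > 0")
    case True
    have "Re a * Re b * Im b = - Im a * Re b * Re b" using e1
      by (metis (no_types, lifting) add.inverse_inverse eq_neg_iff_add_eq_0 mult.assoc mult.commute mult_minus_left)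
    moreover have "Re a * Re b * Im b \<ge> 0" using pos assms(2) by simp
    moreover have "Re b \<noteq> 0" using pos by auto
    hence "Re b * Re b > 0" by (metis not_real_square_gt_zero)
    hence "Im a * Re b * Re b > 0" using True by (simp add: mult.assoc)
    ultimately show False by linarith
  next
    case False
    hence ib: "Im b > 0" using assms by linarith
    have "Re b * Re a * Im a = - Im b * Re a * Re a" using e1
      by (metis (no_types, lifting) add.inverse_inverse eq_neg_iff_add_eq_0 mult.assoc mult.commute mult_minus_left add.commute)
    moreover have "Re b * Re a * Im a \<ge> 0" using pos assms(1) by (simp add: mult.commute)
    moreover have "Re a \<noteq> 0" using pos by auto
    hence "Re a * Re a > 0" by (metis not_real_square_gt_zero)
    hence "Im b * Re a * Re a > 0" using ib by (simp add: mult.assoc)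
    ultimately show False by linarith
  qed
qed

lemma quad_unique:
  fixes y :: real and w :: complex
  assumes y: "y > 0" and w: "Im w > 0"
  shows "\<exists>!s. Im s > 0 \<and> complex_of_real y * s^2 + w * s + 1 = 0"
proof -
  define d where "d = csqrt (w^2 - 4 * complex_of_real y)"
  have d2: "d^2 = w^2 - 4 * complex_of_real y" unfolding d_def by simp
  define s1 where "s1 = (-w + d) / (2 * complex_of_real y)"
  define s2 where "s2 = (-w - d) / (2 * complex_of_real y)"
  have yne: "complex_of_real y \<noteq> 0" using y by simp
  have id: "\<And>x. 4*complex_of_real y*(complex_of_real y * x^2 + w * x + 1) = (2*complex_of_real y*x+w)^2 - (w^2 - 4*complex_of_real y)"
    by (simp add: algebra_simps power2_eq_square)
  have "2*complex_of_real y*s1+w = d" unfolding s1_def using yne by (simp add: field_simps)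
  hence "4*complex_of_real y*(complex_of_real y * s1^2 + w * s1 + 1) = 0" using id[of s1] d2 by simp
  hence q1: "complex_of_real y * s1^2 + w * s1 + 1 = 0" using yne by simp
  have "2*complex_of_real y*s2+w = -d" unfolding s2_def using yne by (simp add: field_simps)
  hence "4*complex_of_real y*(complex_of_real y * s2^2 + w * s2 + 1) = 0" using id[of s2] d2 by simp
  hence q2: "complex_of_real y * s2^2 + w * s2 + 1 = 0" using yne by simp
  have sum: "s1 + s2 = - w / complex_of_real y" unfolding s1_def s2_def using yne
    by (simp add: field_simps)
  have pp: "(-w+d)*(-w-d) = 4*complex_of_real y" using d2 by (simp add: algebra_simps power2_eq_square)
  have prod: "s1 * s2 = 1 / complex_of_real y" unfolding s1_def s2_def using yne pp
    by (simp add: field_simps)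
  have ex: "\<exists>s. Im s > 0 \<and> complex_of_real y * s^2 + w * s + 1 = 0"
  proof (rule ccontr)
    assume "\<not> ?thesis"
    hence "Im s1 \<le> 0" "Im s2 \<le> 0" using q1 q2 by (meson not_le)+
    moreover have "Im (s1 + s2) < 0" using sum y w by (simp add: Im_divide)
    moreover have "(-s1) * (-s2) = complex_of_real (1/y)" using prod by simp
    ultimately show False using sign_lemma[of "-s1" "-s2"] y by simp
  qed
  show ?thesis
  proof (rule ex_ex1I[OF ex])
    fix a b assume a: "Im a > 0 \<and> complex_of_real y * a^2 + w * a + 1 = 0"
      and b: "Im b > 0 \<and> complex_of_real y * b^2 + w * b + 1 = 0"
    show "a = b"
    proof (rule ccontr)
      assume ne: "a \<noteq> b"
      have "(a - b) * (complex_of_real y * (a + b) + w) = 0"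
        using a b by (simp add: algebra_simps power2_eq_square) (metis (no_types, lifting) add_diff_cancel_left' diff_add_cancel diff_diff_add)
      hence "complex_of_real y * (a + b) + w = 0" using ne by simp
      hence wab: "w = - complex_of_real y * (a + b)" by (simp add: eq_neg_iff_add_eq_0 add.commute)
      have "complex_of_real y * (a * b) = 1" using a wab by (simp add: algebra_simps power2_eq_square)
      hence "a * b = complex_of_real (1/y)" using yne by (simp add: field_simps)
      thus False using sign_lemma[of a b] a b y by simp
    qed
  qed
qed


lemma final_ineq:
  fixes c U V Z :: real
  assumes c0: "0 < c" and c1: "c < 1" and U: "U \<ge> (1-c)^2" and V: "V \<ge> 0"
    and Z: "Z = U + V" and Zs: "Z \<le> 1 - c^2"
  shows "U*(Z+(1-c^2))^2/4 + V*(Z-(1-c^2))^2*((1+c)/(4*c^2)) \<le> Z^2"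
proof -
  define A where "A = (Z+(1-c^2))^2/4"
  define B where "B = (Z-(1-c^2))^2*((1+c)/(4*c^2))"
  have Zl: "Z \<ge> (1-c)^2" using U V Z by linarith
  have AZ: "A \<le> Z"
  proof -
    have "1 - c^2 - Z \<le> 2*c*(1-c)" using Zl by (simp add: power2_eq_square algebra_simps)
    moreover have "0 \<le> 1 - c^2 - Z" using Zs by simp
    ultimately have "(1 - c^2 - Z)^2 \<le> (2*c*(1-c))^2" by (simp add: power_mono)
    also have "\<dots> = 4*c^2*(1-c)^2" by (simp add: power_mult_distrib)
    also have "\<dots> \<le> 4*c^2*Z" using Zl c0 by simp
    finally have h: "(1 - c^2 - Z)^2 \<le> 4*c^2*Z" .
    have "(Z+(1-c^2))^2 = (1 - c^2 - Z)^2 + 4*Z*(1-c^2)" by (simp add: power2_eq_square algebra_simps)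
    hence "(Z+(1-c^2))^2 \<le> 4*Z" using h by (simp add: algebra_simps)
    thus ?thesis unfolding A_def by simp
  qed
  have Zp: "Z \<ge> 0" using Zl by (meson order.trans zero_le_power2)
  have H: "(1-c)^2*A + (Z-(1-c)^2)*B \<le> Z^2"
  proof -
    define t where "t = (Z - (1-c)^2)/(2*c*(1-c))"
    have cc: "2*c*(1-c) > 0" using c0 c1 by simp
    have tt: "2*c*(1-c)*t = Z - (1-c)^2" unfolding t_def using c0 c1 by simp
    have Zt: "Z = (1-c)*(1-c+2*c*t)" using tt by (simp add: power2_eq_square algebra_simps)
    have t0: "t \<ge> 0" unfolding t_def using Zl cc by simp
    have t1: "t \<le> 1" unfolding t_def using Zs cc by (simp add: field_simps power2_eq_square algebra_simps)
    have e1: "Z + (1-c^2) = (1-c)*(2+2*c*t)" using Zt by (simp add: power2_eq_square algebra_simps)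
    have e2: "Z - (1-c)^2 = 2*c*(1-c)*t" using Zt by (simp add: power2_eq_square algebra_simps)
    have e3: "Z - (1-c^2) = - (2*c*(1-c)*(1-t))" using Zt by (simp add: power2_eq_square algebra_simps)
    have L: "(1-c)^2*A + (Z-(1-c)^2)*B = (1-c)^2*((1-c)^2*(1+c*t)^2 + 2*c*(1-c)*(1+c)*t*(1-t)^2)"
      unfolding A_def B_def e1 e2 e3 using c0 by (simp add: field_simps power2_eq_square)
    have R: "Z^2 = (1-c)^2*(1-c+2*c*t)^2" unfolding Zt by (simp add: power_mult_distrib)
    have D: "(1-c+2*c*t)^2 - ((1-c)^2*(1+c*t)^2 + 2*c*(1-c)*(1+c)*t*(1-t)^2)
       = c*t*(2*(1-c)*(1+c)*t*(2-t) + c*t*((1+c)*(3-c)))"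
      by (simp add: power2_eq_square algebra_simps)
    have "0 \<le> c*t*(2*(1-c)*(1+c)*t*(2-t) + c*t*((1+c)*(3-c)))"
      using c0 c1 t0 t1 by (intro mult_nonneg_nonneg add_nonneg_nonneg) auto
    hence "(1-c)^2*(1+c*t)^2 + 2*c*(1-c)*(1+c)*t*(1-t)^2 \<le> (1-c+2*c*t)^2" using D by linarith
    hence "(1-c)^2*((1-c)^2*(1+c*t)^2 + 2*c*(1-c)*(1+c)*t*(1-t)^2) \<le> (1-c)^2*(1-c+2*c*t)^2"
      by (simp add: mult_left_mono)
    thus ?thesis using L R by simp
  qed
  have "U*A + V*B \<le> Z^2"
  proof (cases "B \<le> A")
    case True
    have "U*A + V*B \<le> U*A + V*A" using True V by (simp add: mult_left_mono)
    also have "\<dots> = Z*A" using Z by (simp add: algebra_simps)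
    also have "\<dots> \<le> Z*Z" using AZ Zp by (simp add: mult_left_mono)
    finally show ?thesis by (simp add: power2_eq_square)
  next
    case False
    have "U*A + V*B - ((1-c)^2*A + (Z-(1-c)^2)*B) = (U-(1-c)^2)*(A-B)" using Z by (simp add: algebra_simps)
    also have "\<dots> \<le> 0" using False U by (simp add: mult_nonneg_nonpos)
    finally show ?thesis using H by linarith
  qed
  thus ?thesis unfolding A_def B_def by simp
qed

theorem mainTheorem12:
  fixes y :: real and z :: complex
  assumes "0 < y" and "y \<le> 1"
    and "Im z > 0"
    and "1 - sqrt y \<le> \<bar>Re z\<bar>" and "\<bar>Re z\<bar> \<le> 1 + sqrt y"
  shows "cmod (z + complex_of_real y * s_MP y z) \<ge> 1 / (1 + sqrt y)"
proof -
  note y0 = assms(1) and y1 = assms(2) and v0 = assms(3) and ul = assms(4)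
  define c where "c = sqrt y"
  have c0: "c > 0" unfolding c_def using y0 by simp
  have c1: "c \<le> 1" unfolding c_def using y1 by simp
  have yc: "y = c^2" unfolding c_def using y0 by simp
  define u where "u = Re z"
  define v where "v = Im z"
  define Z where "Z = u^2 + v^2"
  have Zp: "Z > 0" unfolding Z_def v_def using v0 by (simp add: add_nonneg_pos)
  have zne: "z \<noteq> 0" using v0 by auto
  define w where "w = z + complex_of_real (y - 1) / z"
  have Imw: "Im w = v * (1 + (1 - y)/Z)"
    unfolding w_def Z_def u_def v_def by (simp add: Im_divide power2_eq_square algebra_simps diff_divide_distrib)
  have "Im w > 0" unfolding Imw using v0 y1 Zp unfolding v_def by (intro mult_pos_pos) (auto intro: add_pos_nonneg)
  from theI'[OF quad_unique[OF y0 this]]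
  have sp: "Im (s_MP y z) > 0" and sq: "complex_of_real y * (s_MP y z)^2 + w * s_MP y z + 1 = 0"
    unfolding s_MP_def w_def by auto
  define s where "s = s_MP y z"
  define m where "m = z + complex_of_real y * s"
  have wz: "w * z = z^2 + complex_of_real (y - 1)" unfolding w_def using zne
    by (simp add: field_simps power2_eq_square)
  define Y where "Y = complex_of_real y"
  have Y1: "complex_of_real (y - 1) = Y - 1" "complex_of_real (1 - y) = 1 - Y" unfolding Y_def by simp_all
  have id1: "\<And>s. z*(z+Y*s)^2 - (z^2 + (1-Y))*(z+Y*s) + z = Y*z*(Y*s^2 + 1) + Y*s*(z^2 + (Y-1))"
    by algebra
  have "Y*z*(Y*s^2 + 1) + Y*s*(z^2 + (Y-1)) = Y*z*(Y*s^2 + w*s + 1)"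
    using wz unfolding Y1 by algebra
  hence meq: "z*m^2 - (z^2 + complex_of_real (1-y))*m + z = 0"
    using id1[of s] sq unfolding m_def Y1 s_def[symmetric] Y_def[symmetric] by simp
  have Imm: "Im m > 0" unfolding m_def s_def using sp v0 y0 by (simp add: add_pos_pos)
  hence mne: "m \<noteq> 0" by auto
  have k0: "z*(m^2+1) - (z^2+(1-Y))*m = 0" using meq unfolding Y1 by (simp add: algebra_simps)
  have k: "z*(m^2+1) = (z^2+(1-Y))*m" using k0 by simp
  have E: "m + inverse m = z + complex_of_real (1-y) * inverse z"
  proof -
    have "m + inverse m = (m^2+1)/m" using mne by (simp add: field_simps power2_eq_square)
    also have "\<dots> = (z^2+(1-Y))/z" using k zne mne by (simp add: divide_eq_eq eq_divide_eq mult.commute frac_eq_eq)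
    also have "\<dots> = z + complex_of_real (1-y) * inverse z" unfolding Y1 using zne by (simp add: field_simps power2_eq_square)
    finally show ?thesis .
  qed
  define p where "p = Re m"
  define q where "q = Im m"
  define R where "R = p^2 + q^2"
  have q0: "q > 0" unfolding q_def using Imm .
  have Rp: "R > 0" unfolding R_def using q0 by (simp add: add_nonneg_pos)
  have ERe: "p + p / R = u + (1-y)*u/Z"
    using arg_cong[OF E, of Re] unfolding p_def q_def R_def u_def Z_def v_def
    by (simp add: power2_eq_square)
  have EIm: "q - q / R = v - (1-y)*v/Z"
    using arg_cong[OF E, of Im] unfolding p_def q_def R_def v_def Z_def u_def
    by (simp add: power2_eq_square)
  have P1: "p*(R+1)*Z = u*(Z+(1-y))*R" using ERe Rp Zp by (simp add: field_simps)
  have P2: "q*(R-1)*Z = v*(Z-(1-y))*R" using EIm Rp Zp by (simp add: field_simps)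
  have cm: "(cmod m)^2 = R" unfolding R_def p_def q_def by (simp add: cmod_power2)
  show ?thesis
  proof (rule ccontr)
    assume "\<not> ?thesis"
    hence lt: "cmod m < 1/(1+c)" unfolding m_def s_def c_def by simp
    have "(cmod m)^2 < (1/(1+c))^2" using lt by (simp add: power_strict_mono)
    hence Rr: "R < 1/(1+c)^2" using cm by (simp add: power_divide)
    have "1 < (1+c)^2" using c0 by (simp add: power2_eq_square algebra_simps add_pos_pos)
    hence "1/(1+c)^2 < 1" by (simp add: divide_less_eq)
    hence R1: "R < 1" using Rr by linarith
    have "q*(R-1)*Z < 0" using q0 R1 Zp by (simp add: mult_neg_pos mult_pos_neg)
    hence "v*(Z-(1-y))*R < 0" using P2 by simp
    hence "v*(Z-(1-y)) < 0" using Rp by (simp add: mult_less_0_iff)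
    hence Zs: "Z < 1 - y" using v0 unfolding v_def by (simp add: mult_less_0_iff)
    have cl1: "c < 1"
    proof (rule ccontr)
      assume "\<not> c < 1" hence "c = 1" using c1 by simp
      hence "y = 1" using yc by simp
      thus False using Zs Zp by simp
    qed
    have U: "u^2 \<ge> (1-c)^2" unfolding u_def using ul c1 unfolding c_def
      by (metis abs_ge_zero abs_le_square_iff abs_of_nonneg diff_ge_0_iff_ge c_def le_less_trans power2_abs)
    have up: "u^2 > 0" using U cl1 by (smt (verit) zero_less_power2)
    have fin: "u^2*(Z+(1-c^2))^2/4 + v^2*(Z-(1-c^2))^2*((1+c)/(4*c^2)) \<le> Z^2"
      using final_ineq[OF c0 cl1 U zero_le_power2 Z_def] Zs yc by simp
    define al where "al = R/(R+1)^2"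
    define be where "be = R/(1-R)^2"
    have al4: "al \<le> 1/4"
    proof -
      have "(R+1)^2 - 4*R = (R-1)^2" by (simp add: power2_eq_square algebra_simps)
      hence "4*R \<le> (R+1)^2" by (metis diff_ge_0_iff_ge zero_le_power2)
      moreover have "(R+1)^2 > 0" using Rp by simp
      ultimately show ?thesis unfolding al_def by (simp add: divide_le_eq)
    qed
    have beK: "be < (1+c)/(4*c^2)"
    proof -
      define r2 where "r2 = 1/(1+c)^2"
      have r2p: "r2 > 0" "r2 * (1+c)^2 = 1" unfolding r2_def using c0 by auto
      have "(1+c)*(1-R)^2 - 4*c^2*R - ((1+c)*(1-r2)^2 - 4*c^2*r2) = (r2 - R)*((1+c)*(2-R-r2) + 4*c^2)"
        by (simp add: power2_eq_square algebra_simps)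
      moreover have "(r2 - R)*((1+c)*(2-R-r2) + 4*c^2) > 0"
      proof (rule mult_pos_pos)
        show "r2 - R > 0" using Rr unfolding r2_def by simp
        have "r2 < 1" unfolding r2_def using \<open>1/(1+c)^2 < 1\<close> by simp
        hence "2 - R - r2 > 0" using R1 by simp
        thus "(1+c)*(2-R-r2) + 4*c^2 > 0" using c0 by (simp add: add_pos_nonneg)
      qed
      moreover have "(1+c)*(1-r2)^2 - 4*c^2*r2 \<ge> 0"
      proof -
        have "(1+c)^4*((1+c)*(1-r2)^2 - 4*c^2*r2) = (1+c)*((1+c)^2 - 1)^2 - 4*c^2*(1+c)^2"
        proof -
          have a1: "(1+c)^2*(1-r2) = (1+c)^2 - 1" using r2p(2) by (simp add: algebra_simps)
          have a2: "(1+c)^4*(1-r2)^2 = ((1+c)^2*(1-r2))^2" by (simp add: power_mult_distrib power2_eq_square power4_eq_xxxx)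
          have a3: "(1+c)^4*r2 = (1+c)^2" proof -
            have "(1+c)^4*r2 = (1+c)^2 * ((1+c)^2*r2)" by (simp add: power4_eq_xxxx power2_eq_square)
            also have "\<dots> = (1+c)^2" using r2p(2) by (simp add: mult.commute)
            finally show ?thesis .
          qed
          have "(1+c)^4*((1+c)*(1-r2)^2 - 4*c^2*r2) = (1+c)*((1+c)^4*(1-r2)^2) - 4*c^2*((1+c)^4*r2)"
            by (simp add: algebra_simps)
          thus ?thesis unfolding a2 a1 a3 .
        qed
        also have "\<dots> = (1+c)*c^4" by (simp add: power2_eq_square power4_eq_xxxx algebra_simps)
        also have "\<dots> \<ge> 0" using c0 by simp
        finally show ?thesis using c0 by (simp add: zero_le_mult_iff)
      qed
      ultimately have "4*c^2*R < (1+c)*(1-R)^2" by linarith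
      thus ?thesis unfolding be_def using R1 c0 by (simp add: field_simps)
    qed
    have sqp: "p^2*Z^2 = u^2*(Z+(1-y))^2*R*al"
    proof -
      have "(p*(R+1)*Z)^2 = (u*(Z+(1-y))*R)^2" using P1 by simp
      hence "p^2*Z^2*(R+1)^2 = u^2*(Z+(1-y))^2*R^2" by (simp add: power_mult_distrib mult_ac)
      moreover have "(R+1)^2 > 0" using Rp by simp
      ultimately have "p^2*Z^2 = u^2*(Z+(1-y))^2*R^2/(R+1)^2" by (simp add: eq_divide_eq)
      thus ?thesis unfolding al_def by (simp add: power2_eq_square)
    qed
    have sqq: "q^2*Z^2 = v^2*(Z-(1-y))^2*R*be"
    proof -
      have "(q*(R-1)*Z)^2 = (v*(Z-(1-y))*R)^2" using P2 by simp
      moreover have "(R-1)^2 = (1-R)^2" by (simp add: power2_eq_square algebra_simps)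
      ultimately have "q^2*Z^2*(1-R)^2 = v^2*(Z-(1-y))^2*R^2" by (simp add: power_mult_distrib mult_ac)
      moreover have "(1-R)^2 > 0" using R1 by simp
      ultimately have "q^2*Z^2 = v^2*(Z-(1-y))^2*R^2/(1-R)^2" by (simp add: eq_divide_eq)
      thus ?thesis unfolding be_def by (simp add: power2_eq_square)
    qed
    have "R*Z^2 = R*(u^2*(Z+(1-y))^2*al + v^2*(Z-(1-y))^2*be)"
      using sqp sqq unfolding R_def by (simp add: algebra_simps)
    hence Zeq: "Z^2 = u^2*(Z+(1-y))^2*al + v^2*(Z-(1-y))^2*be" using Rp by simp
    have "u^2*(Z+(1-y))^2*al \<le> u^2*(Z+(1-y))^2*(1/4)"
      using al4 by (intro mult_left_mono) auto
    moreover have "v^2*(Z-(1-y))^2*be < v^2*(Z-(1-y))^2*((1+c)/(4*c^2))"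
      using beK v0 Zs unfolding v_def by (intro mult_strict_left_mono) auto
    ultimately have "Z^2 < u^2*(Z+(1-c^2))^2/4 + v^2*(Z-(1-c^2))^2*((1+c)/(4*c^2))"
      using Zeq yc by simp
    thus False using fin by simp
  qed
qed

end
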